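(* Let $k\ge1$ and let $X\in GL(2k,\mathbb F_2)$ be the permutation matrix of a product of disjoint transpositions of $[2k]$, each transposition exchanging an index in $\{1,\dots,k\}$ with an index in $\{k+1,\dots,2k\}$. Then $X$ is a product of matrices each of which is either an in-block factor $\mathrm{diag}(C_1,C_2)$ with $C_1,C_2\in GL(k,\mathbb F_2)$, or the codeblock exchange $\begin{pmatrix}0&I_k\\ I_k&0\end{pmatrix}$, or one of the transversal factors $\begin{pmatrix}I_k&I_k\\0&I_k\end{pmatrix}$, $\begin{pmatrix}I_k&0\\ I_k&I_k\end{pmatrix}$, with at most four transversal factors in total.
   Context: Setting: two codeblocks of a CSS code each encoding $k$ logical qubits; logical qubit $j$ of block $1$ has index $j$ and of block $2$ has index $k+j$. A logical CNOT/SWAP circuit is described by its action on $X$-type logical operators, a matrix in $GL(2k,\mathbb F_2)$, and composition is matrix multiplication. In-block factors and the codeblock exchange (relabelling of the two codeblocks) have zero physical cost; each transversal factor has physical depth one. *)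

theory Defs
  imports "HOL-Library.Z2" "Jordan_Normal_Form.Matrix"
begin

text \<open>Matrices over F_2 are Jordan_Normal_Form matrices over the field bit.
  Indices are 0-based: block 1 is {0..<k}, block 2 is {k..<2k}.\<close>

definition perm_matrix :: "nat \<Rightarrow> (nat \<Rightarrow> nat) \<Rightarrow> bit mat" where
  "perm_matrix n \<sigma> = mat n n (\<lambda>(i, j). if i = \<sigma> j then 1 else 0)"

text \<open>A permutation of {0..<2k} that is a product of disjoint transpositions,
  each exchanging an index of block 1 with an index of block 2:
  an involution all of whose non-fixed points are moved across the blocks.\<close>
definition cross_transposition_product :: "nat \<Rightarrow> (nat \<Rightarrow> nat) \<Rightarrow> bool" where
  "cross_transposition_product k \<sigma> \<longleftrightarrow>
     \<sigma> permutes {..<2*k} \<and>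
     (\<forall>i<2*k. \<sigma> (\<sigma> i) = i) \<and>
     (\<forall>i<2*k. \<sigma> i \<noteq> i \<longrightarrow> (i < k \<longleftrightarrow> k \<le> \<sigma> i))"

definition in_block_factors :: "nat \<Rightarrow> bit mat set" where
  "in_block_factors k = {four_block_mat C1 (0\<^sub>m k k) (0\<^sub>m k k) C2 | C1 C2.
      C1 \<in> carrier_mat k k \<and> C2 \<in> carrier_mat k k \<and> invertible_mat C1 \<and> invertible_mat C2}"

definition block_exchange :: "nat \<Rightarrow> bit mat" where
  "block_exchange k = four_block_mat (0\<^sub>m k k) (1\<^sub>m k) (1\<^sub>m k) (0\<^sub>m k k)"

definition transversal_upper :: "nat \<Rightarrow> bit mat" where
  "transversal_upper k = four_block_mat (1\<^sub>m k) (1\<^sub>m k) (0\<^sub>m k k) (1\<^sub>m k)"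

definition transversal_lower :: "nat \<Rightarrow> bit mat" where
  "transversal_lower k = four_block_mat (1\<^sub>m k) (0\<^sub>m k k) (1\<^sub>m k) (1\<^sub>m k)"

definition transversal_factors :: "nat \<Rightarrow> bit mat set" where
  "transversal_factors k = {transversal_upper k, transversal_lower k}"

definition allowed_factors :: "nat \<Rightarrow> bit mat set" where
  "allowed_factors k = in_block_factors k \<union> {block_exchange k} \<union> transversal_factors k"

definition mat_list_prod :: "nat \<Rightarrow> bit mat list \<Rightarrow> bit mat" where
  "mat_list_prod n Ms = foldr (*) Ms (1\<^sub>m n)"

end

theory Submission
  imports Defs "Jordan_Normal_Form.Determinant"
begin

lemma bit_add_self[simp]: "(x::bit) + x = 0" by (cases x) auto

definition qm :: "nat \<Rightarrow> (nat \<Rightarrow> nat) \<Rightarrow> bit mat" where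
  "qm n g = mat n n (\<lambda>(i,j). if i = g j then 1 else 0)"

lemma qm_carrier[simp]: "qm n g \<in> carrier_mat n n" by (simp add: qm_def)
lemma qm_dims[simp]: "dim_row (qm n g) = n" "dim_col (qm n g) = n" by (simp_all add: qm_def)
lemma qm_index[simp]: "i < n \<Longrightarrow> j < n \<Longrightarrow> qm n g $$ (i,j) = (if i = g j then 1 else 0)"
  by (simp add: qm_def)

lemma mult_qm_right:
  assumes "M \<in> carrier_mat n n" "i < n" "j < n"
  shows "(M * qm n g) $$ (i,j) = (if g j < n then M $$ (i, g j) else 0)"
proof -
  have "(M * qm n g) $$ (i,j) = (\<Sum>l\<in>{0..<n}. M $$ (i,l) * (if l = g j then 1 else 0))"
    using assms by (simp add: scalar_prod_def)
  also have "\<dots> = (\<Sum>l\<in>{0..<n}. if l = g j then M $$ (i,l) else 0)"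
    by (rule sum.cong) auto
  also have "\<dots> = (if g j < n then M $$ (i, g j) else 0)"
    by (simp add: sum.delta')
  finally show ?thesis .
qed

lemma qm_mult_qm: "qm n f * qm n g = qm n (\<lambda>j. if g j < n then f (g j) else n)"
  proof (rule eq_matI)
  fix i j assume "i < dim_row (qm n (\<lambda>j. if g j < n then f (g j) else n))" "j < dim_col (qm n (\<lambda>j. if g j < n then f (g j) else n))"
  then show "(qm n f * qm n g) $$ (i, j) = qm n (\<lambda>j. if g j < n then f (g j) else n) $$ (i, j)"
    by (simp add: mult_qm_right[where M="qm n f"] del: index_mult_mat)
qed auto

lemma qm_id: "qm n (\<lambda>j. j) = 1\<^sub>m n"
  by (rule eq_matI) auto

lemma transpose_qm_vec:
  assumes "v \<in> carrier_vec n" "i < n"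
  shows "(transpose_mat (qm n g) *\<^sub>v v) $ i = (if g i < n then v $ g i else 0)"
proof -
  have "(transpose_mat (qm n g) *\<^sub>v v) $ i = (\<Sum>l\<in>{0..<n}. (if l = g i then 1 else 0) * v $ l)"
    using assms by (simp add: scalar_prod_def)
  also have "\<dots> = (\<Sum>l\<in>{0..<n}. if l = g i then v $ l else 0)"
    by (rule sum.cong) auto
  also have "\<dots> = (if g i < n then v $ g i else 0)"
    by (simp add: sum.delta')
  finally show ?thesis .
qed

lemma inv_from_ker:
  assumes M: "(M :: bit mat) \<in> carrier_mat n n"
    and ker: "\<And>v. v \<in> carrier_vec n \<Longrightarrow> transpose_mat M *\<^sub>v v = 0\<^sub>v n \<Longrightarrow> v = 0\<^sub>v n"
  shows "invertible_mat M"
proof -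
  have Mt: "transpose_mat M \<in> carrier_mat n n" using M by simp
  have "det (transpose_mat M) \<noteq> 0" using det_0_iff_vec_prod_zero[OF Mt] ker by auto
  hence "det M \<noteq> 0" using det_transpose[OF M] by simp
  from det_non_zero_imp_unit[OF M this, of "()"]
  obtain B where B: "B \<in> carrier_mat n n" "B * M = 1\<^sub>m n" "M * B = 1\<^sub>m n"
    by (auto simp: Units_def ring_mat_def)
  then show ?thesis using M by (auto simp: invertible_mat_def inverts_mat_def square_mat.simps)
qed

lemma inv_obtain:
  assumes "C \<in> carrier_mat n n" "invertible_mat C"
  shows "\<exists>C'. C' \<in> carrier_mat n n \<and> C * C' = 1\<^sub>m n \<and> C' * C = 1\<^sub>m n \<and> invertible_mat C'"
proof -
  from assms obtain B where B: "C * B = 1\<^sub>m n" "B * C = 1\<^sub>m (dim_row B)"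
    by (auto simp: invertible_mat_def inverts_mat_def)
  have "dim_col B = n" using B(1) by (metis index_mult_mat(3) index_one_mat(3))
  moreover have "dim_row B = n" using B(2) assms(1) by (metis carrier_matD(2) index_mult_mat(3) index_one_mat(3))
  ultimately have Bc: "B \<in> carrier_mat n n" by auto
  show ?thesis
    by (rule exI[of _ B]) (use B Bc assms(1) in \<open>auto simp: invertible_mat_def inverts_mat_def square_mat.simps\<close>)
qed

lemma invertible_one: "invertible_mat (1\<^sub>m n :: bit mat)"
  by (auto simp: invertible_mat_def inverts_mat_def square_mat.simps intro!: exI[of _ "1\<^sub>m n"])

lemma qm_bij_invertible:
  assumes "bij_betw g {..<n} {..<n}"
  shows "invertible_mat (qm n g)"
proof (rule inv_from_ker[OF qm_carrier])
  fix v :: "bit vec" assume v: "v \<in> carrier_vec n" and z: "transpose_mat (qm n g) *\<^sub>v v = 0\<^sub>v n"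
  show "v = 0\<^sub>v n"
  proof (rule eq_vecI)
    fix i assume i: "i < dim_vec (0\<^sub>v n :: bit vec)"
    hence "i < n" by simp
    then obtain j where j: "j < n" "g j = i" using assms by (metis bij_betw_imp_surj_on imageE lessThan_iff)
    have "(transpose_mat (qm n g) *\<^sub>v v) $ j = 0" using z j by simp
    thus "v $ i = 0\<^sub>v n $ i" using transpose_qm_vec[OF v j(1), of g] j \<open>i<n\<close> by simp
  qed (use v in simp)
qed

lemma blk:
  assumes "a \<in> carrier_mat k k" "b \<in> carrier_mat k k" "c \<in> carrier_mat k k" "d \<in> carrier_mat k k"
    "a' \<in> carrier_mat k k" "b' \<in> carrier_mat k k" "c' \<in> carrier_mat k k" "d' \<in> carrier_mat k k"
  shows "four_block_mat a b c d * four_block_mat a' b' c' d' =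
    four_block_mat (a * a' + b * c') (a * b' + b * d') (c * a' + d * c') (c * b' + d * d')"
  by (rule mult_four_block_mat) (use assms in auto)

lemma fb_carrier[simp]: "a \<in> carrier_mat k k \<Longrightarrow> d \<in> carrier_mat k k \<Longrightarrow>
   four_block_mat a b c d \<in> carrier_mat (2*k) (2*k)"
  using four_block_carrier_mat[of a k k d k k b c] by (simp add: mult_2)

lemma conjU:
  assumes A: "(A::bit mat) \<in> carrier_mat k k" and A': "A' \<in> carrier_mat k k" and AA: "A * A' = 1\<^sub>m k"
  shows "four_block_mat A (0\<^sub>m k k) (0\<^sub>m k k) (1\<^sub>m k) * (transversal_upper k * four_block_mat A' (0\<^sub>m k k) (0\<^sub>m k k) (1\<^sub>m k))
     = four_block_mat (1\<^sub>m k) A (0\<^sub>m k k) (1\<^sub>m k)"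
  unfolding transversal_upper_def using A A' AA
  by (simp add: blk[where k=k])

lemma conjL:
  assumes A: "(A::bit mat) \<in> carrier_mat k k" and A': "A' \<in> carrier_mat k k" and AA: "A * A' = 1\<^sub>m k"
  shows "four_block_mat (1\<^sub>m k) (0\<^sub>m k k) (0\<^sub>m k k) A * (transversal_lower k * four_block_mat (1\<^sub>m k) (0\<^sub>m k k) (0\<^sub>m k k) A')
     = four_block_mat (1\<^sub>m k) (0\<^sub>m k k) A (1\<^sub>m k)"
  unfolding transversal_lower_def using A A' AA
  by (simp add: blk[where k=k])

lemma foldr_mult: "set xs \<subseteq> carrier_mat n n \<Longrightarrow> M \<in> carrier_mat n n \<Longrightarrow>
   foldr (*) xs M = foldr (*) xs (1\<^sub>m n) * (M :: bit mat)"
proof (induction xs)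
  case Nil then show ?case by simp
next
  case (Cons a xs)
  have c: "foldr (*) xs (1\<^sub>m n) \<in> carrier_mat n n" using Cons.prems
    by (induction xs) auto
  have "foldr (*) (a # xs) M = a * (foldr (*) xs (1\<^sub>m n) * M)" using Cons by simp
  also have "\<dots> = a * foldr (*) xs (1\<^sub>m n) * M" using Cons.prems c assoc_mult_mat[of a n n "foldr (*) xs (1\<^sub>m n)" n M n] by auto
  finally show ?case by simp
qed

lemma mlp_carrier: "set xs \<subseteq> carrier_mat n n \<Longrightarrow> mat_list_prod n xs \<in> carrier_mat n n"
  unfolding mat_list_prod_def by (induction xs) auto

lemma mlp_append: "set xs \<subseteq> carrier_mat n n \<Longrightarrow> set ys \<subseteq> carrier_mat n n \<Longrightarrow>
   mat_list_prod n (xs @ ys) = mat_list_prod n xs * mat_list_prod n ys"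
  unfolding mat_list_prod_def using foldr_mult[of xs n "foldr (*) ys (1\<^sub>m n)"] mlp_carrier[of ys n]
  by (simp add: mat_list_prod_def)

lemma mlp3: "a \<in> carrier_mat n n \<Longrightarrow> b \<in> carrier_mat n n \<Longrightarrow> c \<in> carrier_mat n n \<Longrightarrow>
   mat_list_prod n [a,b,c] = a * (b * (c :: bit mat))"
  unfolding mat_list_prod_def by simp

lemma perm_blocks:
  "perm_matrix (2*k) \<sigma> = four_block_mat (qm k \<sigma>) (qm k (\<lambda>j. \<sigma> (k+j)))
     (qm k (\<lambda>j. if k \<le> \<sigma> j then \<sigma> j - k else k)) (qm k (\<lambda>j. if k \<le> \<sigma> (k+j) then \<sigma> (k+j) - k else k))"
proof (rule eq_matI)
  fix i j assume ij: "i < dim_row (four_block_mat (qm k \<sigma>) (qm k (\<lambda>j. \<sigma> (k+j)))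
     (qm k (\<lambda>j. if k \<le> \<sigma> j then \<sigma> j - k else k)) (qm k (\<lambda>j. if k \<le> \<sigma> (k+j) then \<sigma> (k+j) - k else k)))"
     "j < dim_col (four_block_mat (qm k \<sigma>) (qm k (\<lambda>j. \<sigma> (k+j)))
     (qm k (\<lambda>j. if k \<le> \<sigma> j then \<sigma> j - k else k)) (qm k (\<lambda>j. if k \<le> \<sigma> (k+j) then \<sigma> (k+j) - k else k)))"
  then have i: "i < 2*k" and j: "j < 2*k" by auto
  show "perm_matrix (2*k) \<sigma> $$ (i,j) = four_block_mat (qm k \<sigma>) (qm k (\<lambda>j. \<sigma> (k+j)))
     (qm k (\<lambda>j. if k \<le> \<sigma> j then \<sigma> j - k else k)) (qm k (\<lambda>j. if k \<le> \<sigma> (k+j) then \<sigma> (k+j) - k else k)) $$ (i,j)"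
  proof (cases "i < k")
    case True
    then show ?thesis using i j by (cases "j < k") (auto simp: perm_matrix_def)
  next
    case False
    then show ?thesis using i j by (cases "j < k") (auto simp: perm_matrix_def)
  qed
qed (auto simp: perm_matrix_def)

lemma qm_cong: "(\<And>j. j < n \<Longrightarrow> f j = g j) \<Longrightarrow> qm n f = qm n g"
  by (rule eq_matI) auto

lemma diag_not_trans:
  assumes "k \<ge> 1" "C \<in> carrier_mat k k" "D \<in> carrier_mat k k"
  shows "four_block_mat C (0\<^sub>m k k) (0\<^sub>m k k) D \<notin> transversal_factors k"
proof
  assume "four_block_mat C (0\<^sub>m k k) (0\<^sub>m k k) D \<in> transversal_factors k"
  then consider "four_block_mat C (0\<^sub>m k k) (0\<^sub>m k k) D = transversal_upper k"
    | "four_block_mat C (0\<^sub>m k k) (0\<^sub>m k k) D = transversal_lower k"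
    unfolding transversal_factors_def by auto
  then show False
  proof cases
    case 1
    then have "four_block_mat C (0\<^sub>m k k) (0\<^sub>m k k) D $$ (0,k) = transversal_upper k $$ (0,k)" by simp
    then show False using assms unfolding transversal_upper_def by simp
  next
    case 2
    then have "four_block_mat C (0\<^sub>m k k) (0\<^sub>m k k) D $$ (k,0) = transversal_lower k $$ (k,0)" by simp
    then show False using assms unfolding transversal_lower_def by simp
  qed
qed

lemma exch_not_trans:
  assumes "k \<ge> 1"
  shows "block_exchange k \<notin> transversal_factors k"
proof
  assume "block_exchange k \<in> transversal_factors k"
  then have "block_exchange k $$ (0,0) = transversal_upper k $$ (0,0) \<or> block_exchange k $$ (0,0) = transversal_lower k $$ (0,0)"
    unfolding transversal_factors_def by auto
  then show False using assms unfolding transversal_upper_def transversal_lower_def block_exchange_def by simp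
qed

lemma U_trans: "transversal_upper k \<in> transversal_factors k" and L_trans: "transversal_lower k \<in> transversal_factors k"
  by (auto simp: transversal_factors_def)

lemma diag_allowed:
  assumes "C \<in> carrier_mat k k" "D \<in> carrier_mat k k" "invertible_mat C" "invertible_mat D"
  shows "four_block_mat C (0\<^sub>m k k) (0\<^sub>m k k) D \<in> allowed_factors k"
  using assms unfolding allowed_factors_def in_block_factors_def by blast

lemma trans_allowed: "transversal_upper k \<in> allowed_factors k" "transversal_lower k \<in> allowed_factors k"
  "block_exchange k \<in> allowed_factors k"
  by (auto simp: allowed_factors_def transversal_factors_def)

lemma trans_carrier[simp]: "transversal_upper k \<in> carrier_mat (2*k) (2*k)" "transversal_lower k \<in> carrier_mat (2*k) (2*k)"
  "block_exchange k \<in> carrier_mat (2*k) (2*k)"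
  by (auto simp: transversal_upper_def transversal_lower_def block_exchange_def)

lemma bit_cancel[simp]: "(x::bit) + (y + x) = y" "(x::bit) + (x + y) = y" "(y::bit) + x + x = y"
  by (cases x; cases y; simp)+

lemma "1\<^sub>m k * 1\<^sub>m k = (1\<^sub>m k :: bit mat)" by simp
lemma "A \<in> carrier_mat k k \<Longrightarrow> 1\<^sub>m k * A = (A :: bit mat)" by simp
lemma "A \<in> carrier_mat k k \<Longrightarrow> 1\<^sub>m k * A + 0\<^sub>m k k = (A :: bit mat)" by simp
lemma add_cancel_mat:
  assumes "A \<in> carrier_mat n m" "M \<in> carrier_mat n m"
  shows "A + (M + A) = (M :: bit mat)"
proof (rule eq_matI)
  fix i j assume ij: "i < dim_row M" "j < dim_col M"
  have "(A + (M + A)) $$ (i,j) = A $$ (i,j) + (M $$ (i,j) + A $$ (i,j))"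
    using ij assms by (simp only: index_add_mat carrier_matD)
  also have "\<dots> = M $$ (i,j)" by (rule bit_cancel(1))
  finally show "(A + (M + A)) $$ (i,j) = M $$ (i,j)" .
qed (use assms in auto)

lemma test:
  assumes A: "(A::bit mat) \<in> carrier_mat k k" and P: "P \<in> carrier_mat k k"
  shows "four_block_mat (1\<^sub>m k) A (0\<^sub>m k k) (1\<^sub>m k) * (four_block_mat (1\<^sub>m k) (0\<^sub>m k k) P (1\<^sub>m k) * four_block_mat (1\<^sub>m k) A (0\<^sub>m k k) (1\<^sub>m k)) = four_block_mat (1\<^sub>m k + A * P) (A + A * (P * A + 1\<^sub>m k)) P (P * A + 1\<^sub>m k)"
  using A P by (simp add: blk[where k=k])

lemma main_B:
  fixes k t :: nat and \<sigma> \<psi> h :: "nat \<Rightarrow> nat"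
  assumes k1: "k \<ge> 1" and t: "t < k" "\<sigma> t < k"
    and bpsi: "bij_betw \<psi> {..<k} {..<k}"
    and hlt: "\<And>x. x < k \<Longrightarrow> h x < k"
    and hpsi: "\<And>x. x < k \<Longrightarrow> h (\<psi> x) = x"
    and psih: "\<And>x. x < k \<Longrightarrow> \<psi> (h x) = x"
    and psiS1: "\<And>x. x < k \<Longrightarrow> k \<le> \<sigma> x \<Longrightarrow> \<psi> x = \<sigma> x - k"
    and hS: "\<And>x. x < k \<Longrightarrow> (k \<le> \<sigma> (h x)) = (\<sigma> (k+x) < k)"
    and hS2: "\<And>x. x < k \<Longrightarrow> \<sigma> (k+x) < k \<Longrightarrow> h x = \<sigma> (k+x)"
    and F1: "\<And>x. x < k \<Longrightarrow> \<sigma> x < k \<Longrightarrow> \<sigma> x = x"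
    and F2: "\<And>x. x < k \<Longrightarrow> k \<le> \<sigma> (k+x) \<Longrightarrow> \<sigma> (k+x) = k+x"
  shows "\<exists>Ms. set Ms \<subseteq> allowed_factors k \<and>
           length (filter (\<lambda>M. M \<in> transversal_factors k) Ms) \<le> 4 \<and>
           perm_matrix (2*k) \<sigma> = mat_list_prod (2*k) Ms"
proof -
  have psilt: "\<And>x. x < k \<Longrightarrow> \<psi> x < k" using bpsi by (auto simp: bij_betw_def)
  have bh: "bij_betw h {..<k} {..<k}"
    by (rule bij_betw_byWitness[where f'=\<psi>]) (auto simp: hpsi psih hlt psilt)
  define p where "p = (\<lambda>j. if k \<le> \<sigma> j then \<sigma> j - k else k)"
  define c where "c = (\<lambda>i::nat. if Suc i = k then 0 else Suc i)"
  define c' where "c' = (\<lambda>i::nat. if i = 0 then k - 1 else i - 1)"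
  have c_mod: "\<And>i. i < k \<Longrightarrow> c i = Suc i mod k"
    unfolding c_def by auto
  have bc: "bij_betw c {..<k} {..<k}"
    by (rule bij_betw_byWitness[where f'=c']) (use k1 in \<open>auto simp: c_def c'_def\<close>)
  define b where "b = (\<lambda>i. \<psi> (c i))"
  have bb: "bij_betw b {..<k} {..<k}"
    using bij_betw_trans[OF bc bpsi] unfolding b_def comp_def by simp
  define A where "A = qm k h"
  define A' where "A' = qm k \<psi>"
  define P where "P = qm k p"
  define B1 where "B1 = qm k b"
  define B2 where "B2 = P + B1"
  have Ac[simp]: "A \<in> carrier_mat k k" "A' \<in> carrier_mat k k" "P \<in> carrier_mat k k" "B1 \<in> carrier_mat k k"
    "B2 \<in> carrier_mat k k"
    by (auto simp: A_def A'_def P_def B1_def B2_def)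
  have Ad[simp]: "dim_row A = k" "dim_col A = k" "dim_row A' = k" "dim_col A' = k" "dim_row P = k" "dim_col P = k"
    "dim_row B1 = k" "dim_col B1 = k" "dim_row B2 = k" "dim_col B2 = k"
    by (auto simp: A_def A'_def P_def B1_def B2_def)
  have AA': "A * A' = 1\<^sub>m k"
    unfolding A_def A'_def qm_mult_qm qm_id[symmetric]
    by (rule qm_cong) (auto simp: psilt hpsi)
  have invA: "invertible_mat A" unfolding A_def by (rule qm_bij_invertible[OF bh])
  have invA': "invertible_mat A'" unfolding A'_def by (rule qm_bij_invertible[OF bpsi])
  have invB1: "invertible_mat B1" unfolding B1_def by (rule qm_bij_invertible[OF bb])
  have invB2: "invertible_mat B2"
  proof (rule inv_from_ker[OF Ac(5)])
    fix v :: "bit vec" assume v: "v \<in> carrier_vec k" and z: "transpose_mat B2 *\<^sub>v v = 0\<^sub>v k"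
    have rel: "(if k \<le> \<sigma> i then v $ \<psi> i else 0) + v $ \<psi> (c i) = 0" if i: "i < k" for i
    proof -
      have "transpose_mat B2 = transpose_mat P + transpose_mat B1"
        unfolding B2_def by (rule transpose_add) (auto simp: P_def B1_def)
      then have "transpose_mat B2 *\<^sub>v v = transpose_mat P *\<^sub>v v + transpose_mat B1 *\<^sub>v v"
        using v by (simp add: add_mult_distrib_mat_vec[of _ k k])
      moreover have "(transpose_mat B2 *\<^sub>v v) $ i = 0" using z i by simp
      ultimately have "(transpose_mat P *\<^sub>v v + transpose_mat B1 *\<^sub>v v) $ i = 0" by simp
      then have "(transpose_mat P *\<^sub>v v) $ i + (transpose_mat B1 *\<^sub>v v) $ i = 0"
        using i by (simp add: P_def B1_def)
      then show ?thesis
        unfolding P_def B1_def transpose_qm_vec[OF v i] p_def b_def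
        using i psiS1[OF i] psilt[OF i] psilt[of "c i"] c_mod[OF i] by (auto split: if_splits)
    qed
    have w: "v $ \<psi> ((Suc t + m) mod k) = 0" for m
    proof (induction m)
      case 0
      have "Suc t mod k < k" using k1 by simp
      have "c t = Suc t mod k" using c_mod t by simp
      then show ?case using rel[OF t(1)] t by (simp add: not_le[symmetric])
    next
      case (Suc m)
      define x where "x = (Suc t + m) mod k"
      have x: "x < k" using k1 unfolding x_def by simp
      have "c x = Suc x mod k" by (rule c_mod[OF x])
      also have "\<dots> = (Suc t + Suc m) mod k" unfolding x_def by (simp add: mod_Suc_eq)
      finally have "c x = (Suc t + Suc m) mod k" .
      then show ?case using rel[OF x] Suc.IH unfolding x_def[symmetric] by (simp split: if_splits)
    qed
    show "v = 0\<^sub>v k"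
    proof (rule eq_vecI)
      fix y assume "y < dim_vec (0\<^sub>v k :: bit vec)"
      then have y: "y < k" by simp
      define x where "x = h y"
      have x: "x < k" using hlt y unfolding x_def by simp
      have "(Suc t + (x + k - Suc t)) mod k = x" using t x by simp
      then have "v $ \<psi> x = 0" using w[of "x + k - Suc t"] by simp
      then show "v $ y = 0\<^sub>v k $ y" using y psih unfolding x_def by simp
    qed (use v in simp)
  qed
  obtain B1' where B1': "B1' \<in> carrier_mat k k" "B1 * B1' = 1\<^sub>m k" "invertible_mat B1'"
    using inv_obtain[OF Ac(4) invB1] by blast
  obtain B2' where B2': "B2' \<in> carrier_mat k k" "B2 * B2' = 1\<^sub>m k" "invertible_mat B2'"
    using inv_obtain[OF Ac(5) invB2] by blast
  have inv1: "invertible_mat (1\<^sub>m k :: bit mat)" by (rule invertible_one)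
  define dA where "dA = four_block_mat A (0\<^sub>m k k) (0\<^sub>m k k) (1\<^sub>m k)"
  define dA' where "dA' = four_block_mat A' (0\<^sub>m k k) (0\<^sub>m k k) (1\<^sub>m k)"
  define d1 where "d1 = four_block_mat (1\<^sub>m k) (0\<^sub>m k k) (0\<^sub>m k k) B1"
  define d1' where "d1' = four_block_mat (1\<^sub>m k) (0\<^sub>m k k) (0\<^sub>m k k) B1'"
  define d2 where "d2 = four_block_mat (1\<^sub>m k) (0\<^sub>m k k) (0\<^sub>m k k) B2"
  define d2' where "d2' = four_block_mat (1\<^sub>m k) (0\<^sub>m k k) (0\<^sub>m k k) B2'"
  define G1 where "G1 = [dA, transversal_upper k, dA']"
  define G2 where "G2 = [d1, transversal_lower k, d1']"
  define G3 where "G3 = [d2, transversal_lower k, d2']"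
  define Ms where "Ms = G1 @ G2 @ G3 @ G1"
  have dc: "dA \<in> carrier_mat (2*k) (2*k)" "dA' \<in> carrier_mat (2*k) (2*k)" "d1 \<in> carrier_mat (2*k) (2*k)"
    "d1' \<in> carrier_mat (2*k) (2*k)" "d2 \<in> carrier_mat (2*k) (2*k)" "d2' \<in> carrier_mat (2*k) (2*k)"
    unfolding dA_def dA'_def d1_def d1'_def d2_def d2'_def using B1' B2' by auto
  have Gc: "set G1 \<subseteq> carrier_mat (2*k) (2*k)" "set G2 \<subseteq> carrier_mat (2*k) (2*k)" "set G3 \<subseteq> carrier_mat (2*k) (2*k)"
    unfolding G1_def G2_def G3_def using dc by auto
  have p1: "mat_list_prod (2*k) G1 = four_block_mat (1\<^sub>m k) A (0\<^sub>m k k) (1\<^sub>m k)"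
    unfolding G1_def using dc by (simp add: mlp3 dA_def dA'_def conjU[OF _ _ AA'])
  have p2: "mat_list_prod (2*k) G2 = four_block_mat (1\<^sub>m k) (0\<^sub>m k k) B1 (1\<^sub>m k)"
    unfolding G2_def using dc by (simp add: mlp3 d1_def d1'_def conjL[OF _ B1'(1) B1'(2)])
  have p3: "mat_list_prod (2*k) G3 = four_block_mat (1\<^sub>m k) (0\<^sub>m k k) B2 (1\<^sub>m k)"
    unfolding G3_def using dc by (simp add: mlp3 d2_def d2'_def conjL[OF _ B2'(1) B2'(2)])
  have B12: "B1 + B2 = P"
    by (rule eq_matI) (auto simp: B2_def P_def B1_def)
  have LL: "four_block_mat (1\<^sub>m k) (0\<^sub>m k k) B1 (1\<^sub>m k) * four_block_mat (1\<^sub>m k) (0\<^sub>m k k) B2 (1\<^sub>m k)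
      = four_block_mat (1\<^sub>m k) (0\<^sub>m k k) P (1\<^sub>m k)"
    using B12 by (simp add: blk[where k=k])
  have prod: "mat_list_prod (2*k) Ms = four_block_mat (1\<^sub>m k + A * P) (A + A * (P * A + 1\<^sub>m k)) P (P * A + 1\<^sub>m k)"
  proof -
    have "mat_list_prod (2*k) Ms = mat_list_prod (2*k) G1 * (mat_list_prod (2*k) G2 * (mat_list_prod (2*k) G3 * mat_list_prod (2*k) G1))"
      unfolding Ms_def using Gc by (simp add: mlp_append)
    also have "\<dots> = four_block_mat (1\<^sub>m k) A (0\<^sub>m k k) (1\<^sub>m k) * (four_block_mat (1\<^sub>m k) (0\<^sub>m k k) B1 (1\<^sub>m k) *
       (four_block_mat (1\<^sub>m k) (0\<^sub>m k k) B2 (1\<^sub>m k) * four_block_mat (1\<^sub>m k) A (0\<^sub>m k k) (1\<^sub>m k)))"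
      unfolding p1 p2 p3 ..
    also have "\<dots> = four_block_mat (1\<^sub>m k) A (0\<^sub>m k k) (1\<^sub>m k) * (four_block_mat (1\<^sub>m k) (0\<^sub>m k k) P (1\<^sub>m k) *
        four_block_mat (1\<^sub>m k) A (0\<^sub>m k k) (1\<^sub>m k))"
      by (subst assoc_mult_mat[symmetric, of _ "2*k" "2*k" _ "2*k" _ "2*k"]) (auto simp: LL)
    also have "\<dots> = four_block_mat (1\<^sub>m k + A * P) (A + A * (P * A + 1\<^sub>m k)) P (P * A + 1\<^sub>m k)"
      by (simp add: blk[where k=k])
    finally show ?thesis .
  qed
  have pj: "p j = \<psi> j" "\<psi> j < k" if "j < k" "k \<le> \<sigma> j" for j
    using that psiS1[OF that] psilt[OF that(1)] unfolding p_def by auto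
  have pj2: "p j = k" if "\<not> k \<le> \<sigma> j" for j
    using that unfolding p_def by auto
  have AP: "A * P = qm k (\<lambda>j. if p j < k then h (p j) else k)"
    unfolding A_def P_def qm_mult_qm ..
  have PA: "P * A = qm k (\<lambda>j. if h j < k then p (h j) else k)"
    unfolding A_def P_def qm_mult_qm ..
  have APA: "A * (P * A) = qm k (\<lambda>j. if (if h j < k then p (h j) else k) < k then h (if h j < k then p (h j) else k) else k)"
    unfolding PA unfolding A_def qm_mult_qm ..
  have b1: "qm k \<sigma> = 1\<^sub>m k + A * P"
  proof (rule eq_matI)
    fix i j assume "i < dim_row (1\<^sub>m k + A * P)" "j < dim_col (1\<^sub>m k + A * P)"
    then have i: "i < k" and j: "j < k" by auto
    show "qm k \<sigma> $$ (i, j) = (1\<^sub>m k + A * P) $$ (i, j)"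
    proof (cases "k \<le> \<sigma> j")
      case True
      then show ?thesis using i j pj[OF j True] hpsi[OF j] unfolding AP by simp
    next
      case False
      then show ?thesis using i j pj2[OF False] F1[OF j] unfolding AP by simp
    qed
  qed auto
  have b2: "qm k (\<lambda>j. \<sigma> (k+j)) = A + A * (P * A + 1\<^sub>m k)"
  proof -
    have "A * (P * A + 1\<^sub>m k) = A * (P * A) + A * 1\<^sub>m k"
      by (rule mult_add_distrib_mat[of _ k k]) auto
    then have e: "A + A * (P * A + 1\<^sub>m k) = A + (A * (P * A) + A)" by simp
    show ?thesis unfolding e
    proof (rule eq_matI)
      fix i j assume "i < dim_row (A + (A * (P * A) + A))" "j < dim_col (A + (A * (P * A) + A))"
      then have i: "i < k" and j: "j < k" by auto
      have "(A + (A * (P * A) + A)) $$ (i,j) = (A * (P * A)) $$ (i,j)"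
        by (subst add_cancel_mat[of _ k k]) auto
      also have "\<dots> = qm k (\<lambda>j. \<sigma> (k+j)) $$ (i,j)"
      proof (cases "\<sigma> (k+j) < k")
        case True
        then have "k \<le> \<sigma> (h j)" using hS[OF j] by simp
        then show ?thesis unfolding APA using i j hlt[OF j] pj[OF hlt[OF j]] psih[OF j] hS2[OF j True] by simp
      next
        case False
        then have "\<not> k \<le> \<sigma> (h j)" using hS[OF j] by simp
        then show ?thesis unfolding APA using i j hlt[OF j] pj2 F2[OF j] False by simp
      qed
      finally show "qm k (\<lambda>j. \<sigma> (k+j)) $$ (i,j) = (A + (A * (P * A) + A)) $$ (i,j)" by simp
    qed auto
  qed
  have b4: "qm k (\<lambda>j. if k \<le> \<sigma> (k+j) then \<sigma> (k+j) - k else k) = P * A + 1\<^sub>m k"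
  proof (rule eq_matI)
    fix i j assume "i < dim_row (P * A + 1\<^sub>m k)" "j < dim_col (P * A + 1\<^sub>m k)"
    then have i: "i < k" and j: "j < k" by auto
    show "qm k (\<lambda>j. if k \<le> \<sigma> (k+j) then \<sigma> (k+j) - k else k) $$ (i, j) = (P * A + 1\<^sub>m k) $$ (i, j)"
    proof (cases "\<sigma> (k+j) < k")
      case True
      then have "k \<le> \<sigma> (h j)" using hS[OF j] by simp
      then show ?thesis unfolding PA using i j True hlt[OF j] pj[OF hlt[OF j]] psih[OF j] by simp
    next
      case False
      then have "\<not> k \<le> \<sigma> (h j)" using hS[OF j] by simp
      then show ?thesis unfolding PA using i j False hlt[OF j] pj2 F2[OF j] by simp
    qed
  qed auto
  have eq: "perm_matrix (2*k) \<sigma> = mat_list_prod (2*k) Ms"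
    unfolding prod perm_blocks b1 b2 b4 by (simp add: P_def p_def)
  have allowed: "set Ms \<subseteq> allowed_factors k"
    unfolding Ms_def G1_def G2_def G3_def dA_def dA'_def d1_def d1'_def d2_def d2'_def
    using diag_allowed invA invA' invB1 invB2 B1' B2' inv1 trans_allowed by auto
  have cnt: "length (filter (\<lambda>M. M \<in> transversal_factors k) Ms) \<le> 4"
    unfolding Ms_def G1_def G2_def G3_def dA_def dA'_def d1_def d1'_def d2_def d2'_def
    using diag_not_trans[OF k1] B1' B2' U_trans L_trans by simp
  show ?thesis using eq allowed cnt by blast
qed

lemma main_A:
  fixes k :: nat and \<sigma> \<psi> h :: "nat \<Rightarrow> nat"
  assumes k1: "k \<ge> 1"
    and all1: "\<And>x. x < k \<Longrightarrow> k \<le> \<sigma> x"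
    and all2: "\<And>x. x < k \<Longrightarrow> \<sigma> (k+x) < k"
    and bpsi: "bij_betw \<psi> {..<k} {..<k}"
    and bh: "bij_betw h {..<k} {..<k}"
    and psiS1: "\<And>x. x < k \<Longrightarrow> k \<le> \<sigma> x \<Longrightarrow> \<psi> x = \<sigma> x - k"
    and hS2: "\<And>x. x < k \<Longrightarrow> \<sigma> (k+x) < k \<Longrightarrow> h x = \<sigma> (k+x)"
  shows "\<exists>Ms. set Ms \<subseteq> allowed_factors k \<and>
           length (filter (\<lambda>M. M \<in> transversal_factors k) Ms) \<le> 4 \<and>
           perm_matrix (2*k) \<sigma> = mat_list_prod (2*k) Ms"
proof -
  define H where "H = qm k h"
  define Q where "Q = qm k \<psi>"
  have c[simp]: "H \<in> carrier_mat k k" "Q \<in> carrier_mat k k" by (auto simp: H_def Q_def)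
  have d[simp]: "dim_row H = k" "dim_col H = k" "dim_row Q = k" "dim_col Q = k" by (auto simp: H_def Q_def)
  have iH: "invertible_mat H" unfolding H_def by (rule qm_bij_invertible[OF bh])
  have iQ: "invertible_mat Q" unfolding Q_def by (rule qm_bij_invertible[OF bpsi])
  define D where "D = four_block_mat H (0\<^sub>m k k) (0\<^sub>m k k) Q"
  define Ms where "Ms = [D, block_exchange k]"
  have Dc: "D \<in> carrier_mat (2*k) (2*k)" unfolding D_def by simp
  have z1: "qm k \<sigma> = 0\<^sub>m k k"
    by (rule eq_matI) (use all1 in \<open>auto simp: not_le[symmetric]\<close>)
  have z2: "qm k (\<lambda>j. if k \<le> \<sigma> (k+j) then \<sigma> (k+j) - k else k) = 0\<^sub>m k k"
    by (rule eq_matI) (use all2 in \<open>auto simp: not_le[symmetric]\<close>)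
  have e1: "qm k (\<lambda>j. \<sigma> (k+j)) = H"
    unfolding H_def by (rule qm_cong) (use hS2 all2 in auto)
  have e2: "qm k (\<lambda>j. if k \<le> \<sigma> j then \<sigma> j - k else k) = Q"
    unfolding Q_def by (rule qm_cong) (use psiS1 all1 in auto)
  have "mat_list_prod (2*k) Ms = D * block_exchange k"
    unfolding Ms_def mat_list_prod_def using Dc by (simp add: right_mult_one_mat[OF trans_carrier(3)])
  also have "\<dots> = four_block_mat (0\<^sub>m k k) H Q (0\<^sub>m k k)"
    unfolding D_def block_exchange_def by (simp add: blk[where k=k])
  finally have eq: "perm_matrix (2*k) \<sigma> = mat_list_prod (2*k) Ms"
    unfolding perm_blocks z1 z2 e1 e2 by simp
  have allowed: "set Ms \<subseteq> allowed_factors k"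
    unfolding Ms_def D_def using diag_allowed[OF c iH iQ] trans_allowed by auto
  have cnt: "length (filter (\<lambda>M. M \<in> transversal_factors k) Ms) \<le> 4"
    unfolding Ms_def D_def using diag_not_trans[OF k1 c] exch_not_trans[OF k1] by simp
  show ?thesis using eq allowed cnt by blast
qed

theorem mainTheorem2:
  fixes k :: nat and \<sigma> :: "nat \<Rightarrow> nat"
  assumes "k \<ge> 1"
    and "cross_transposition_product k \<sigma>"
  shows "\<exists>Ms. set Ms \<subseteq> allowed_factors k \<and>
           length (filter (\<lambda>M. M \<in> transversal_factors k) Ms) \<le> 4 \<and>
           perm_matrix (2*k) \<sigma> = mat_list_prod (2*k) Ms"
proof -
  note k1 = assms(1)
  have perm: "\<sigma> permutes {..<2*k}" and inv: "\<And>i. i < 2*k \<Longrightarrow> \<sigma> (\<sigma> i) = i"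
    and cr: "\<And>i. i < 2*k \<Longrightarrow> \<sigma> i \<noteq> i \<Longrightarrow> (i < k \<longleftrightarrow> k \<le> \<sigma> i)"
    using assms(2) unfolding cross_transposition_product_def by auto
  have rng: "\<And>i. i < 2*k \<Longrightarrow> \<sigma> i < 2*k" using permutes_in_image[OF perm] by auto
  have F1: "\<And>x. x < k \<Longrightarrow> \<sigma> x < k \<Longrightarrow> \<sigma> x = x"
    using cr by (metis less_le_not_le not_less trans_less_add1 mult_2)
  have F2: "\<And>x. x < k \<Longrightarrow> k \<le> \<sigma> (k+x) \<Longrightarrow> \<sigma> (k+x) = k+x"
    using cr by (metis add_less_cancel_left mult_2 not_add_less1)
  define S1 where "S1 = {x. x < k \<and> k \<le> \<sigma> x}"
  define S2 where "S2 = {x. x < k \<and> \<sigma> (k+x) < k}"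
  define f where "f = (\<lambda>x. \<sigma> x - k)"
  have bf: "bij_betw f S1 S2"
  proof (rule bij_betw_byWitness[where f'="\<lambda>j. \<sigma> (k+j)"])
    show "\<forall>a\<in>S1. \<sigma> (k + f a) = a"
      unfolding S1_def f_def using inv by auto
    show "\<forall>a'\<in>S2. f (\<sigma> (k + a')) = a'"
      unfolding S2_def f_def using inv by auto
    show "f ` S1 \<subseteq> S2"
    proof
      fix y assume "y \<in> f ` S1"
      then obtain x where x: "x < k" "k \<le> \<sigma> x" "y = \<sigma> x - k" unfolding S1_def f_def by auto
      have "\<sigma> x < 2*k" using rng x by simp
      then show "y \<in> S2" unfolding S2_def using x inv[of x] by auto
    qed
    show "(\<lambda>j. \<sigma> (k + j)) ` S2 \<subseteq> S1"
    proof
      fix y assume "y \<in> (\<lambda>j. \<sigma> (k + j)) ` S2"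
      then obtain x where x: "x < k" "\<sigma> (k+x) < k" "y = \<sigma> (k+x)" unfolding S2_def by auto
      then show "y \<in> S1" unfolding S1_def using inv[of "k+x"] by auto
    qed
  qed
  define T1 where "T1 = {..<k} - S1"
  define T2 where "T2 = {..<k} - S2"
  have sub: "S1 \<subseteq> {..<k}" "S2 \<subseteq> {..<k}" unfolding S1_def S2_def by auto
  have cT: "card T1 = card T2"
    unfolding T1_def T2_def using card_Diff_subset[of S1 "{..<k}"] card_Diff_subset[of S2 "{..<k}"]
      bij_betw_same_card[OF bf] sub finite_subset[OF sub(1)] finite_subset[OF sub(2)] by simp
  obtain g where bg: "bij_betw g T1 T2"
    using finite_same_card_bij[of T1 T2] cT unfolding T1_def T2_def by auto
  define \<psi> where "\<psi> = (\<lambda>x. if x \<in> S1 then f x else g x)"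
  have b1: "bij_betw \<psi> S1 S2" using bf by (rule bij_betw_cong[THEN iffD1, rotated]) (auto simp: \<psi>_def)
  have b2: "bij_betw \<psi> T1 T2" using bg by (rule bij_betw_cong[THEN iffD1, rotated]) (auto simp: \<psi>_def T1_def)
  have bpsi: "bij_betw \<psi> {..<k} {..<k}"
  proof -
    have "bij_betw \<psi> (S1 \<union> T1) (S2 \<union> T2)" by (rule bij_betw_combine[OF b1 b2]) (auto simp: T2_def)
    moreover have "S1 \<union> T1 = {..<k}" "S2 \<union> T2 = {..<k}" using sub by (auto simp: T1_def T2_def)
    ultimately show ?thesis by simp
  qed
  define h where "h = inv_into {..<k} \<psi>"
  have bh: "bij_betw h {..<k} {..<k}" unfolding h_def by (rule bij_betw_inv_into[OF bpsi])
  have hlt: "\<And>x. x < k \<Longrightarrow> h x < k" using bh by (auto simp: bij_betw_def)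
  have hpsi: "\<And>x. x < k \<Longrightarrow> h (\<psi> x) = x"
    unfolding h_def using bpsi by (auto simp: bij_betw_def inv_into_f_f)
  have psih: "\<And>x. x < k \<Longrightarrow> \<psi> (h x) = x"
    unfolding h_def using bpsi by (auto simp: bij_betw_def f_inv_into_f)
  have psiS1: "\<And>x. x < k \<Longrightarrow> k \<le> \<sigma> x \<Longrightarrow> \<psi> x = \<sigma> x - k"
    unfolding \<psi>_def S1_def f_def by auto
  have hS: "(k \<le> \<sigma> (h x)) = (\<sigma> (k+x) < k)" if x: "x < k" for x
  proof -
    have y: "h x < k" using hlt x by simp
    show ?thesis
    proof (cases "h x \<in> S1")
      case True
      then have "\<psi> (h x) \<in> S2" using b1 by (auto simp: bij_betw_def)
      then show ?thesis using True psih[OF x] unfolding S1_def S2_def by auto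
    next
      case False
      then have "h x \<in> T1" using y by (auto simp: T1_def)
      then have "\<psi> (h x) \<in> T2" using b2 by (auto simp: bij_betw_def)
      then show ?thesis using False psih[OF x] y unfolding S1_def T2_def S2_def by auto
    qed
  qed
  have hS2: "h x = \<sigma> (k+x)" if x: "x < k" and lt: "\<sigma> (k+x) < k" for x
  proof -
    define y where "y = \<sigma> (k+x)"
    have "\<sigma> y = k + x" unfolding y_def using inv[of "k+x"] x by simp
    then have yS: "y \<in> S1" using lt unfolding S1_def y_def by auto
    then have "\<psi> y = x" unfolding \<psi>_def f_def using \<open>\<sigma> y = k + x\<close> by simp
    then show ?thesis using hpsi[of y] yS unfolding y_def S1_def by auto
  qed
  show ?thesis
  proof (cases "\<exists>t<k. \<sigma> t < k")
    case True
    then obtain t where t: "t < k" "\<sigma> t < k" by blast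
    show ?thesis
      by (rule main_B[OF k1 t bpsi hlt hpsi psih psiS1 hS hS2 F1 F2])
  next
    case False
    then have all1: "\<And>x. x < k \<Longrightarrow> k \<le> \<sigma> x" by (meson not_less)
    then have "T1 = {}" unfolding T1_def S1_def by auto
    then have "T2 = {}" using cT unfolding T2_def by simp
    then have all2: "\<And>x. x < k \<Longrightarrow> \<sigma> (k+x) < k" unfolding T2_def S2_def by auto
    show ?thesis by (rule main_A[OF k1 all1 all2 bpsi bh psiS1 hS2])
  qed
qed

end
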